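(* Let $(V,g)$ be a Euclidean vector space of dimension $n\ge3$, $N=\frac{(n-1)(n+2)}{2}$. (1) If $1\le\alpha_1\le\alpha_2<N$ and $\theta>-1$, then $\mathcal{C}(\alpha_1,\theta)\subset\mathcal{C}(\alpha_2,\theta)$. (2) If $\alpha\in[1,N)$ and $-1<\theta_1\le\theta_2$, then $\mathcal{C}(\alpha,\theta_1)\subset\mathcal{C}(\alpha,\theta_2)$.
   Context: $S^2_0(V)$ is the space of traceless symmetric two-tensors on $V$ (dimension $N$). For a symmetric operator on $S^2_0(V)$ with eigenvalues $\lambda_1\le\cdots\le\lambda_N$ and average $\bar\lambda$, write $\lambda_1+\cdots+\lambda_\alpha:=\lambda_1+\cdots+\lambda_{[\alpha]}+(\alpha-[\alpha])\lambda_{[\alpha]+1}$; $\mathcal{C}(\alpha,\theta)$ is the cone of symmetric operators on $S^2_0(V)$ with $\alpha^{-1}(\lambda_1+\cdots+\lambda_\alpha)\ge-\theta\bar\lambda$. (In the paper these cones are considered for operators $\mathring{R}$ induced by algebraic curvature tensors.) *)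

theory Defs
  imports "Jordan_Normal_Form.Char_Poly" "HOL-Library.Multiset"
begin

text \<open>A symmetric operator on the N-dimensional Euclidean space S^2_0(V) is represented by
  its (real, symmetric) N x N matrix with respect to an orthonormal basis.\<close>

definition sym_op :: "nat \<Rightarrow> real mat \<Rightarrow> bool" where
  "sym_op N A \<longleftrightarrow> A \<in> carrier_mat N N \<and> transpose_mat A = A"

text \<open>Eigenvalues (with multiplicity) in increasing order: lambda_1 <= ... <= lambda_N
  is the list at positions 0, ..., N-1.\<close>

definition eigs :: "real mat \<Rightarrow> real list" where
  "eigs A = sorted_list_of_multiset (proots (char_poly A))"

definition partial_eig_sum :: "real mat \<Rightarrow> real \<Rightarrow> real" where
  "partial_eig_sum A \<alpha> =
     (\<Sum>i<nat \<lfloor>\<alpha>\<rfloor>. eigs A ! i) + (\<alpha> - of_int \<lfloor>\<alpha>\<rfloor>) * eigs A ! nat \<lfloor>\<alpha>\<rfloor>"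

definition avg_eig :: "nat \<Rightarrow> real mat \<Rightarrow> real" where
  "avg_eig N A = (\<Sum>i<N. eigs A ! i) / real N"

definition cone :: "nat \<Rightarrow> real \<Rightarrow> real \<Rightarrow> real mat set" where
  "cone N \<alpha> \<theta> = {A. sym_op N A \<and> partial_eig_sum A \<alpha> / \<alpha> \<ge> - \<theta> * avg_eig N A}"

end

theory Submission
  imports Defs
begin

lemma real_eig:
  fixes A :: "real mat"
  assumes A: "A \<in> carrier_mat n n" and sym: "transpose_mat A = A"
    and r: "poly (char_poly (map_mat complex_of_real A)) a = 0"
  shows "cnj a = a"
proof -
  let ?B = "map_mat complex_of_real A"
  have B: "?B \<in> carrier_mat n n" using A by simp
  have "eigenvalue ?B a" using eigenvalue_root_char_poly[OF B] r by simp
  then obtain v where v: "v \<in> carrier_vec n" "v \<noteq> 0\<^sub>v n" "?B *\<^sub>v v = a \<cdot>\<^sub>v v"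
    unfolding eigenvalue_def eigenvector_def using B by auto
  have symij: "A $$ (i,j) = A $$ (j,i)" if "i < n" "j < n" for i j
    using sym A that by (metis carrier_matD index_transpose_mat(1))
  define s where "s = (\<Sum>i<n. cnj (v$i) * (?B *\<^sub>v v)$i)"
  have s1: "s = (\<Sum>i<n. \<Sum>j<n. cnj (v$i) * of_real (A $$ (i,j)) * v$j)"
    unfolding s_def using A v(1)
    by (auto simp: scalar_prod_def sum_distrib_left mult.assoc intro!: sum.cong)
  have "cnj s = (\<Sum>i<n. \<Sum>j<n. v$i * of_real (A $$ (i,j)) * cnj (v$j))"
    unfolding s1 by (simp add: cnj_sum)
  also have "\<dots> = (\<Sum>j<n. \<Sum>i<n. v$i * of_real (A $$ (i,j)) * cnj (v$j))"
    by (rule sum.swap)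
  also have "\<dots> = s" unfolding s1
    by (intro sum.cong refl) (simp add: symij mult.commute mult.left_commute)
  finally have cs: "cnj s = s" .
  define r where "r = (\<Sum>i<n. cnj (v$i) * v$i)"
  have s2: "s = a * r" unfolding s_def r_def using v
    by (auto simp: sum_distrib_left mult_ac intro!: sum.cong)
  have rr: "r = of_real (\<Sum>i<n. (cmod (v$i))^2)"
    unfolding r_def of_real_sum
    by (intro sum.cong refl) (simp add: complex_norm_square mult.commute del: of_real_power)
  obtain i where i: "i < n" "v $ i \<noteq> 0" using v(1,2) by (metis eq_vecI carrier_vecD index_zero_vec(1,2))
  have "(\<Sum>i<n. (cmod (v$i))^2) > 0"
    by (rule sum_pos2[of _ i]) (use i in auto)
  hence r0: "r \<noteq> 0" unfolding rr by (metis less_irrefl of_real_eq_0_iff)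
  have "cnj a * r = a * r" using cs unfolding s2 rr by simp
  thus ?thesis using r0 by simp
qed

lemma proots_lin: "proots (\<Prod>r\<leftarrow>rs. [:- r, 1:]) = mset (rs::real list)"
proof (induction rs)
  case Nil thus ?case by simp
next
  case (Cons r rs)
  have nz: "(\<Prod>r\<leftarrow>rs. [:- r, 1:]) \<noteq> (0::real poly)" by (auto simp: prod_list_zero_iff)
  have "proots ([:- r, 1:] * (\<Prod>r\<leftarrow>rs. [:- r, 1:])) = proots [:- r, 1:] + proots (\<Prod>r\<leftarrow>rs. [:- r, 1:])"
    by (rule proots_mult) (use nz in auto)
  thus ?case using Cons by simp
qed

lemma len_eigs:
  assumes "sym_op n A"
  shows "length (eigs A) = n"
proof -
  have A: "A \<in> carrier_mat n n" and sym: "transpose_mat A = A" using assms unfolding sym_op_def by auto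
  let ?B = "map_mat complex_of_real A"
  have B: "?B \<in> carrier_mat n n" using A by simp
  have cpB: "char_poly ?B = map_poly of_real (char_poly A)"
    by (rule of_real_hom.char_poly_hom[OF A])
  obtain as where as: "char_poly ?B = (\<Prod>a\<leftarrow>as. [:- a, 1:])" "length as = n"
    using char_poly_factorized[OF B] by blast
  have re: "a = of_real (Re a)" if "a \<in> set as" for a
  proof -
    have "poly (char_poly ?B) a = 0" unfolding as(1) using that
      by (simp add: poly_prod_list prod_list_zero_iff)
    from real_eig[OF A sym this] have "a \<in> \<real>" using Reals_cnj_iff by blast
    thus ?thesis by (simp add: of_real_Re)
  qed
  define rs where "rs = map Re as"
  interpret m: map_poly_inj_idom_hom "of_real :: real \<Rightarrow> complex" ..
  have "map_poly of_real (\<Prod>r\<leftarrow>rs. [:- r, 1:]) = (\<Prod>r\<leftarrow>rs. [:- of_real r, 1:] :: complex poly)"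
    by (simp add: m.hom_prod_list o_def)
  also have "\<dots> = (\<Prod>a\<leftarrow>as. [:- a, 1:])"
  proof -
    have "map (\<lambda>r. [:- complex_of_real r, 1:]) rs = map (\<lambda>a. [:-a,1:]) as"
      unfolding rs_def map_map
    proof (rule map_cong[OF refl])
      fix x assume "x \<in> set as"
      from re[OF this] show "((\<lambda>r. [:- complex_of_real r, 1:]) \<circ> Re) x = [:-x,1:]"
        by (metis comp_apply)
    qed
    thus ?thesis by simp
  qed
  finally have "map_poly complex_of_real (char_poly A) = map_poly complex_of_real (\<Prod>r\<leftarrow>rs. [:- r, 1:])"
    using as(1) cpB by simp
  hence cp: "char_poly A = (\<Prod>r\<leftarrow>rs. [:- r, 1:])" by (simp add: m.eq_iff)
  have "proots (char_poly A) = mset rs"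
    unfolding cp by (rule proots_lin)
  then have "size (proots (char_poly A)) = length rs" by simp
  thus ?thesis unfolding eigs_def rs_def using as(2)
    by (metis length_map size_mset mset_sorted_list_of_multiset)
qed

definition PS :: "real list \<Rightarrow> real \<Rightarrow> real" where
  "PS l \<alpha> = (\<Sum>i<nat \<lfloor>\<alpha>\<rfloor>. l ! i) + (\<alpha> - of_int \<lfloor>\<alpha>\<rfloor>) * l ! nat \<lfloor>\<alpha>\<rfloor>"

lemma PS_mono:
  assumes srt: "sorted l" and len: "length l = N" and a1: "1 \<le> a" and ab: "a < b" and bN: "b \<le> real N"
  shows "PS l a / a \<le> PS l b / b"
proof -
  define k where "k = nat \<lfloor>a\<rfloor>"
  define m where "m = nat \<lfloor>b\<rfloor>"
  have rk: "real k = of_int \<lfloor>a\<rfloor>" unfolding k_def using a1 by simp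
  have rm: "real m = of_int \<lfloor>b\<rfloor>" unfolding m_def using a1 ab by simp
  have ka: "real k \<le> a" "a < real k + 1" using rk by linarith+
  have mb: "real m \<le> b" "b < real m + 1" using rm by linarith+
  have km: "k \<le> m" unfolding k_def m_def using ab by (simp add: floor_mono nat_mono)
  have kN: "k < N" using ka ab bN by linarith
  have mN: "m \<le> N" using mb bN by linarith
  define c where "c = l ! k"
  have mono: "l ! i \<le> l ! j" if "i \<le> j" "j < N" for i j
    using sorted_nth_mono[OF srt that(1)] that(2) len by simp
  have Sa: "PS l a = (\<Sum>i<k. l ! i) + (a - real k) * c"
    unfolding PS_def c_def k_def using a1 by simp
  have Sb: "PS l b = (\<Sum>i<m. l ! i) + (b - real m) * l ! m"
    unfolding PS_def m_def using a1 ab by simp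
  have s1: "(\<Sum>i<k. l ! i) \<le> real k * c"
  proof -
    have "(\<Sum>i<k. l ! i) \<le> (\<Sum>i<k. c)" unfolding c_def
      by (rule sum_mono) (use kN in \<open>auto intro: mono\<close>)
    thus ?thesis by simp
  qed
  have i: "PS l a \<le> a * c"
  proof -
    have "(a - real k) * c = a * c - real k * c" by (simp add: algebra_simps)
    thus ?thesis using Sa s1 by linarith
  qed
  have split: "(\<Sum>i<m. l ! i) = (\<Sum>i<k. l ! i) + (\<Sum>i\<in>{k..<m}. l ! i)"
  proof -
    have "{..<m} = {..<k} \<union> {k..<m}" using km by auto
    thus ?thesis by (simp add: sum.union_disjoint ivl_disj_int)
  qed
  have s2: "(\<Sum>i\<in>{k..<m}. l ! i) \<ge> real (m - k) * c"
  proof -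
    have "(\<Sum>i\<in>{k..<m}. l ! i) \<ge> (\<Sum>i\<in>{k..<m}. c)" unfolding c_def
      by (rule sum_mono) (use mN in \<open>auto intro: mono\<close>)
    thus ?thesis by simp
  qed
  have s3: "(b - real m) * l ! m \<ge> (b - real m) * c"
  proof (cases "m < N")
    case True
    thus ?thesis unfolding c_def using mb km by (intro mult_left_mono mono) auto
  next
    case False
    hence "b = real m" using mN mb bN by linarith
    thus ?thesis by simp
  qed
  have rmk: "real (m - k) = real m - real k" using km by simp
  have ii: "PS l b - PS l a \<ge> (b - a) * c"
  proof -
    have "PS l b - PS l a = (\<Sum>i\<in>{k..<m}. l ! i) + (b - real m) * l ! m - (a - real k) * c"
      using Sa Sb split by simp
    also have "\<dots> \<ge> (real m - real k) * c + (b - real m) * c - (a - real k) * c"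
      using s2[unfolded rmk] s3 by linarith
    finally show ?thesis by (simp add: algebra_simps)
  qed
  have a0: "a > 0" using a1 by simp
  have "a * PS l b \<ge> a * PS l a + a * ((b - a) * c)"
    using mult_left_mono[OF ii, of a] a0 by (simp add: algebra_simps)
  moreover have "a * ((b - a) * c) \<ge> (b - a) * PS l a"
    using mult_left_mono[OF i, of "b - a"] ab by (simp add: algebra_simps)
  ultimately have "a * PS l b \<ge> b * PS l a" by (simp add: algebra_simps)
  thus ?thesis using a0 ab by (simp add: divide_simps mult.commute)
qed


lemma cone_facts:
  assumes "A \<in> cone N \<alpha> \<theta>"
  shows "sorted (eigs A)" "length (eigs A) = N"
    "partial_eig_sum A \<alpha> = PS (eigs A) \<alpha>"
    "avg_eig N A = PS (eigs A) (real N) / real N"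
    "PS (eigs A) \<alpha> / \<alpha> \<ge> - \<theta> * (PS (eigs A) (real N) / real N)"
proof -
  show "sorted (eigs A)" unfolding eigs_def by simp
  show "length (eigs A) = N" using assms len_eigs unfolding cone_def by auto
  show pe: "partial_eig_sum A \<alpha> = PS (eigs A) \<alpha>" unfolding partial_eig_sum_def PS_def ..
  show av: "avg_eig N A = PS (eigs A) (real N) / real N" unfolding avg_eig_def PS_def by simp
  show "PS (eigs A) \<alpha> / \<alpha> \<ge> - \<theta> * (PS (eigs A) (real N) / real N)"
    using assms unfolding cone_def by (simp add: pe av)
qed

theorem proposition2p8:
  fixes n N :: nat
  assumes "n \<ge> 3"
    and "N = (n - 1) * (n + 2) div 2"
  shows "(\<forall>\<alpha>1 \<alpha>2 \<theta> :: real. 1 \<le> \<alpha>1 \<and> \<alpha>1 \<le> \<alpha>2 \<and> \<alpha>2 < real N \<and> \<theta> > -1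
            \<longrightarrow> cone N \<alpha>1 \<theta> \<subseteq> cone N \<alpha>2 \<theta>)
       \<and> (\<forall>\<alpha> \<theta>1 \<theta>2 :: real. 1 \<le> \<alpha> \<and> \<alpha> < real N \<and> -1 < \<theta>1 \<and> \<theta>1 \<le> \<theta>2
            \<longrightarrow> cone N \<alpha> \<theta>1 \<subseteq> cone N \<alpha> \<theta>2)"
proof (intro conjI allI impI subsetI)
  fix \<alpha>1 \<alpha>2 \<theta> :: real and A
  assume h: "1 \<le> \<alpha>1 \<and> \<alpha>1 \<le> \<alpha>2 \<and> \<alpha>2 < real N \<and> \<theta> > -1" and A: "A \<in> cone N \<alpha>1 \<theta>"
  note f = cone_facts[OF A]
  have sym: "sym_op N A" using A unfolding cone_def by simp
  have "PS (eigs A) \<alpha>1 / \<alpha>1 \<le> PS (eigs A) \<alpha>2 / \<alpha>2"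
  proof (cases "\<alpha>1 = \<alpha>2")
    case False
    thus ?thesis using h by (intro PS_mono[OF f(1,2)]) auto
  qed simp
  hence "PS (eigs A) \<alpha>2 / \<alpha>2 \<ge> - \<theta> * (PS (eigs A) (real N) / real N)" using f(5) by linarith
  thus "A \<in> cone N \<alpha>2 \<theta>" unfolding cone_def using sym
    by (simp add: partial_eig_sum_def avg_eig_def PS_def)
next
  fix \<alpha> \<theta>1 \<theta>2 :: real and A
  assume h: "1 \<le> \<alpha> \<and> \<alpha> < real N \<and> -1 < \<theta>1 \<and> \<theta>1 \<le> \<theta>2" and A: "A \<in> cone N \<alpha> \<theta>1"
  note f = cone_facts[OF A]
  have sym: "sym_op N A" using A unfolding cone_def by simp
  define p where "p = PS (eigs A) \<alpha> / \<alpha>"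
  define v where "v = PS (eigs A) (real N) / real N"
  have p1: "p \<ge> - \<theta>1 * v" using f(5) unfolding p_def v_def .
  have "p \<ge> - \<theta>2 * v"
  proof (cases "v \<ge> 0")
    case True
    have "\<theta>1 * v \<le> \<theta>2 * v" using True h by (intro mult_right_mono) auto
    thus ?thesis using p1 by linarith
  next
    case False
    have "p \<le> v" unfolding p_def v_def using h by (intro PS_mono[OF f(1,2)]) auto
    moreover have "(\<theta>1 + 1) * (- v) > 0" using False h by (intro mult_pos_pos) auto
    ultimately show ?thesis using p1 by (simp add: algebra_simps)
  qed
  thus "A \<in> cone N \<alpha> \<theta>2" unfolding cone_def using sym f(3,4)
    by (simp add: p_def v_def)
qed

end
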